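(* Let $p<q$ be coprime positive integers, $m$ a positive integer, $j\in\{3,4\}$ and $R=\mathbb C[X_0,X_1,X_j]$. Define $\mu:\mathbb Z^3\to\mathbb Z^3$, $\mu(d_0,d_1,d_j)=(d_0-pd_1+qd_j,\;d_1-d_j,\;pd_1-qd_j)$ (injective), $\Lambda=\mu(\mathbb Z_{\ge0}^3)$, and for $\lambda\in\Lambda$ let $f_\lambda=X_0^{d_0}X_1^{d_1}X_j^{d_j}$ where $\mu(d_0,d_1,d_j)=\lambda$. For $(n,c)$ with $(n,c,\omega)\in\Lambda$ for some $\omega$, let $\omega_{(n,c)}=\min\{\omega:(n,c,\omega)\in\Lambda\}$. For $(n,d)\in\mathbb Z\times\mathbb Z/m\mathbb Z$ let $\Lambda_{(n,d)}=\{(n,c,\omega)\in\Lambda: c\equiv d \pmod m\}$ and $c_{(n,d)}=\min\{c\in\mathbb Z: c\equiv d\pmod m,\ (n,c,\omega)\in\Lambda\text{ for some }\omega\}$. Let $\lambda=(n,c,\omega)$ and $\lambda'=(n,c',\omega')$ be elements of $\Lambda_{(n,d)}$. Then, with ideals taken in $R$: (i) if $c=c'$, then $f_\lambda-f_{\lambda'}\in(X_0^{q-p}-X_1X_j)$; (ii) if $c>c_{(n,d)}$, then $f_\lambda\in(X_0^{q-p}-X_1X_j,\;X_0^{mp}X_1^m)$; (iii) $f_\lambda-f_{\lambda'}\in(X_0^{q-p}-X_1X_j,\;1-X_0^{mp}X_1^m)$. If moreover $m=a(q-p)$ for a positive integer $a$, then: (iv) if $\omega=\omega'$, then $f_\lambda-f_{\lambda'}\in(1-X_1^{aq}X_j^{ap})$;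 (v) if $\omega=\omega_{(n,c)}$ and $\omega'=\omega_{(n,c')}$, then $\omega=\omega'$, and in particular $f_\lambda-f_{\lambda'}\in(1-X_1^{aq}X_j^{ap})$.
   Context: The minima $\omega_{(n,c)}$ and $c_{(n,d)}$ exist (the defining sets are nonempty and bounded below). The first coordinate of $\mu$ is the weight of the monomial under the $\mathbb C^*$-action with weights $1,-p,q$ on $X_0,X_1,X_j$, and $c\bmod m$ is its $\mu_m$-weight. *)

theory Defs
  imports Complex_Main "HOL-Computational_Algebra.Polynomial" "HOL-Number_Theory.Cong"
begin

text \<open>R = C[X0,X1,Xj] is modelled as the iterated polynomial ring
  ((complex poly) poly) poly: innermost variable X0, middle X1, outermost Xj.\<close>
type_synonym R3 = "complex poly poly poly"

definition mono3 :: "nat \<Rightarrow> nat \<Rightarrow> nat \<Rightarrow> R3" where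
  "mono3 d0 d1 dj = monom (monom (monom 1 d0) d1) dj"

definition X0 :: R3 where "X0 = mono3 1 0 0"
definition X1 :: R3 where "X1 = mono3 0 1 0"
definition Xj :: R3 where "Xj = mono3 0 0 1"

definition mu :: "nat \<Rightarrow> nat \<Rightarrow> nat \<times> nat \<times> nat \<Rightarrow> int \<times> int \<times> int" where
  "mu p q d = (case d of (d0, d1, dj) \<Rightarrow>
     (int d0 - int p * int d1 + int q * int dj, int d1 - int dj, int p * int d1 - int q * int dj))"

definition Lambda :: "nat \<Rightarrow> nat \<Rightarrow> (int \<times> int \<times> int) set" where
  "Lambda p q = mu p q ` UNIV"

definition flam :: "nat \<Rightarrow> nat \<Rightarrow> int \<times> int \<times> int \<Rightarrow> R3" where
  "flam p q l = (THE f. \<exists>d0 d1 dj. mu p q (d0, d1, dj) = l \<and> f = mono3 d0 d1 dj)"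

definition omega_min :: "nat \<Rightarrow> nat \<Rightarrow> int \<Rightarrow> int \<Rightarrow> int" where
  "omega_min p q n c = (LEAST w. (n, c, w) \<in> Lambda p q)"

definition c_min :: "nat \<Rightarrow> nat \<Rightarrow> nat \<Rightarrow> int \<Rightarrow> int \<Rightarrow> int" where
  "c_min p q m n d = (LEAST c. [c = d] (mod int m) \<and> (\<exists>w. (n, c, w) \<in> Lambda p q))"

definition in_ideal1 :: "R3 \<Rightarrow> R3 \<Rightarrow> bool" where
  "in_ideal1 f g \<longleftrightarrow> (\<exists>a. f = a * g)"

definition in_ideal2 :: "R3 \<Rightarrow> R3 \<Rightarrow> R3 \<Rightarrow> bool" where
  "in_ideal2 f g h \<longleftrightarrow> (\<exists>a b. f = a * g + b * h)"

end

theory Submission imports Defs begin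

lemma pow_monom3: "(monom (monom (monom (1::complex) a) b) c) ^ k = monom (monom (monom 1 (a*k)) (b*k)) (c*k)"
  by (simp add: monom_power)

lemma mono3_split: "mono3 a b c = X0 ^ a * X1 ^ b * Xj ^ c"
  unfolding mono3_def X0_def X1_def Xj_def
  by (simp add: monom_power mult_monom)

lemma dvd_pow_diff: "(x - y) dvd (x ^ k - y ^ k :: 'a::comm_ring_1)"
  by (simp add: power_diff_sumr2)

lemma mu_inj: assumes "p \<noteq> q" "mu p q d = mu p q e" shows "d = e"
proof -
  obtain a b c where d: "d = (a,b,c)" by (cases d) auto
  obtain a' b' c' where e: "e = (a',b',c')" by (cases e) auto
  have h: "int a - int p * int b + int q * int c = int a' - int p * int b' + int q * int c'"
     "int b - int c = int b' - int c'" "int p * int b - int q * int c = int p * int b' - int q * int c'"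
    using assms(2) by (auto simp: mu_def d e)
  have "(int q - int p) * int c = (int q - int p) * int c'" using h(2,3) by algebra
  moreover have "int q - int p \<noteq> 0" using assms(1) by simp
  ultimately have "c = c'" by simp
  then show ?thesis using h d e by auto
qed

lemma flam_mu: assumes "p \<noteq> q" shows "flam p q (mu p q (d0,d1,dj)) = X0 ^ d0 * X1 ^ d1 * Xj ^ dj"
proof -
  have "flam p q (mu p q (d0,d1,dj)) = mono3 d0 d1 dj"
    unfolding flam_def
    apply (rule the_equality)
    using mu_inj[OF assms] by blast+
  then show ?thesis by (simp add: mono3_split)
qed

lemma pow_swap: "((x::'a::monoid_mult) ^ r) ^ k = (x ^ k) ^ r"
  by (metis power_mult mult.commute)

lemma mu_eqs: assumes "mu p q (d0,d1,dj) = (n,c,w)"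
  shows "n = int d0 - int p * int d1 + int q * int dj" "c = int d1 - int dj" "w = int p * int d1 - int q * int dj"
  using assms by (auto simp: mu_def)

lemma partI_core:
  assumes pq: "p < q" and m1: "mu p q (d0,d1,dj) = (n,c,w)" and m2: "mu p q (e0,e1,ej) = (n,c,w')"
    and le: "ej \<le> dj"
  shows "(X0 ^ (q - p) - X1 * Xj) dvd (X0^d0*X1^d1*Xj^dj - X0^e0*X1^e1*Xj^ej)"
proof -
  define k where "k = dj - ej"
  note a = mu_eqs[OF m1] and b = mu_eqs[OF m2]
  have dj: "dj = ej + k" using le k_def by simp
  have d1: "d1 = e1 + k" using a(2) b(2) dj by simp
  have "int e0 = int d0 + (int q - int p) * int k" using a(1) b(1) dj d1 by (simp add: algebra_simps)
  then have "int e0 = int (d0 + (q - p) * k)" using pq by (simp add: of_nat_diff)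
  then have e0: "e0 = d0 + (q - p) * k" by (simp only: of_nat_eq_iff)
  define r where "r = q - p"
  have e0': "e0 = d0 + r * k" using e0 r_def by simp
  have "X0^d0*X1^d1*Xj^dj - X0^e0*X1^e1*Xj^ej
      = (X0^d0*X1^e1*Xj^ej) * ((X1*Xj)^k - (X0^r)^k)"
    unfolding dj d1 e0' by (simp add: power_add power_mult power_mult_distrib algebra_simps pow_swap)
  also have "\<dots> = - (X0^d0*X1^e1*Xj^ej) * ((X0^(q-p))^k - (X1*Xj)^k)" by (simp add: r_def algebra_simps)
  finally show ?thesis using dvd_pow_diff[of "X0^(q-p)" "X1*Xj" k] by (metis dvd_mult)
qed

lemma partI_mu:
  assumes pq: "p < q" and m1: "mu p q (d0,d1,dj) = (n,c,w)" and m2: "mu p q (e0,e1,ej) = (n,c,w')"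
  shows "(X0 ^ (q - p) - X1 * Xj) dvd (X0^d0*X1^d1*Xj^dj - X0^e0*X1^e1*Xj^ej)"
proof (cases "ej \<le> dj")
  case True then show ?thesis using partI_core[OF assms] by simp
next
  case False
  then have "(X0 ^ (q - p) - X1 * Xj) dvd (X0^e0*X1^e1*Xj^ej - X0^d0*X1^d1*Xj^dj)"
    using partI_core[OF pq m2 m1] by simp
  then show ?thesis by (metis dvd_minus_iff minus_diff_eq)
qed

lemma Lam_obtain: assumes "l \<in> Lambda p q" obtains d0 d1 dj where "mu p q (d0,d1,dj) = l"
  using assms unfolding Lambda_def by (metis image_iff prod_cases3)

lemma Lam_I: "mu p q (d0,d1,dj) = l \<Longrightarrow> l \<in> Lambda p q"
  unfolding Lambda_def by auto

lemma partI:
  assumes pq: "p < q" and "(n,c,w) \<in> Lambda p q" "(n,c,w') \<in> Lambda p q"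
  shows "(X0 ^ (q - p) - X1 * Xj) dvd (flam p q (n,c,w) - flam p q (n,c,w'))"
proof -
  obtain d0 d1 dj where m1: "mu p q (d0,d1,dj) = (n,c,w)" using assms(2) Lam_obtain by blast
  obtain e0 e1 ej where m2: "mu p q (e0,e1,ej) = (n,c,w')" using assms(3) Lam_obtain by blast
  show ?thesis using partI_mu[OF pq m1 m2] flam_mu[of p q] pq m1 m2 by (metis less_irrefl)
qed

lemma shift_m:
  assumes pq: "p < q" and "(n,c,w) \<in> Lambda p q"
  shows "(n, c + int m * int t, w + int p * int m * int t) \<in> Lambda p q \<and>
    flam p q (n, c + int m * int t, w + int p * int m * int t) = flam p q (n,c,w) * (X0^(m*p)*X1^m)^t"
proof -
  obtain d0 d1 dj where m1: "mu p q (d0,d1,dj) = (n,c,w)" using assms(2) Lam_obtain by blast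
  have m2: "mu p q (d0 + m*p*t, d1 + m*t, dj) = (n, c + int m * int t, w + int p * int m * int t)"
    using m1 by (auto simp: mu_def algebra_simps)
  have "flam p q (n, c + int m * int t, w + int p * int m * int t) = X0^(d0 + m*p*t) * X1^(d1 + m*t) * Xj^dj"
    using flam_mu[of p q] pq m2 by (metis less_irrefl)
  also have "\<dots> = (X0^d0*X1^d1*Xj^dj) * (X0^(m*p)*X1^m)^t"
    by (simp add: power_add power_mult power_mult_distrib algebra_simps)
  also have "X0^d0*X1^d1*Xj^dj = flam p q (n,c,w)" using flam_mu[of p q] pq m1 by (metis less_irrefl)
  finally show ?thesis using Lam_I[OF m2] by simp
qed

lemma shift_a:
  assumes pq: "p < q" and "(n,c,w) \<in> Lambda p q"
  shows "(n, c + int (a*(q-p)) * int t, w) \<in> Lambda p q \<and>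
    flam p q (n, c + int (a*(q-p)) * int t, w) = flam p q (n,c,w) * (X1^(a*q)*Xj^(a*p))^t"
proof -
  obtain d0 d1 dj where m1: "mu p q (d0,d1,dj) = (n,c,w)" using assms(2) Lam_obtain by blast
  have m2: "mu p q (d0, d1 + a*q*t, dj + a*p*t) = (n, c + int (a*(q-p)) * int t, w)"
    using m1 pq by (auto simp: mu_def algebra_simps of_nat_diff)
  have "flam p q (n, c + int (a*(q-p)) * int t, w) = X0^d0 * X1^(d1 + a*q*t) * Xj^(dj + a*p*t)"
    using flam_mu[of p q] pq m2 by (metis less_irrefl)
  also have "\<dots> = (X0^d0*X1^d1*Xj^dj) * (X1^(a*q)*Xj^(a*p))^t"
    by (simp add: power_add power_mult power_mult_distrib algebra_simps)
  also have "X0^d0*X1^d1*Xj^dj = flam p q (n,c,w)" using flam_mu[of p q] pq m1 by (metis less_irrefl)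
  finally show ?thesis using Lam_I[OF m2] by simp
qed

lemma lower_w:
  assumes pq: "p < q" and "(n,c,w) \<in> Lambda p q" and "n + w - int (q-p) * int s \<ge> 0"
  shows "(n,c,w - int (q-p) * int s) \<in> Lambda p q"
proof -
  obtain d0 d1 dj where m1: "mu p q (d0,d1,dj) = (n,c,w)" using assms(2) Lam_obtain by blast
  have "mu p q (nat (n + w - int (q-p) * int s), d1 + s, dj + s) = (n,c,w - int (q-p) * int s)"
    using m1 pq assms(3) by (auto simp: mu_def algebra_simps of_nat_diff)
  then show ?thesis by (rule Lam_I)
qed

lemma Lam_facts:
  assumes pq: "p < q" and "(n,c,w) \<in> Lambda p q"
  shows "w \<ge> -n" "int q * c \<ge> -n" "(int q - int p) dvd (int p * c - w)"
proof -
  obtain d0 d1 dj where m1: "mu p q (d0,d1,dj) = (n,c,w)" using assms(2) Lam_obtain by blast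
  note a = mu_eqs[OF m1]
  show "w \<ge> -n" using a by simp
  have "int q * c = (int q - int p) * int d1 + int d0 - n" by (simp add: a algebra_simps)
  then show "int q * c \<ge> -n" using pq by simp
  have "int p * c - w = (int q - int p) * int dj" by (simp add: a algebra_simps)
  then show "(int q - int p) dvd (int p * c - w)" by simp
qed

lemma int_least:
  fixes b :: int
  assumes "P x" "\<And>y. P y \<Longrightarrow> b \<le> y"
  shows "P (LEAST y. P y) \<and> (\<forall>y. P y \<longrightarrow> (LEAST y. P y) \<le> y)"
proof -
  define k0 where "k0 = (LEAST k::nat. P (b + int k))"
  have ex: "P (b + int (nat (x - b)))" using assms by simp
  have P0: "P (b + int k0)" unfolding k0_def by (rule LeastI[where P="\<lambda>k. P (b + int k)", OF ex])
  have min: "b + int k0 \<le> y" if "P y" for y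
  proof -
    have "P (b + int (nat (y - b)))" using that assms(2)[OF that] by simp
    then have "k0 \<le> nat (y - b)" unfolding k0_def by (rule Least_le)
    then show ?thesis using assms(2)[OF that] by linarith
  qed
  have "(LEAST y. P y) = b + int k0" by (rule Least_equality[where P=P, OF P0 min])
  then show ?thesis using P0 min by simp
qed

lemma in1_dvd: "in_ideal1 f g \<longleftrightarrow> g dvd f"
  by (auto simp: in_ideal1_def dvd_def mult.commute)

lemma in2_neg: "in_ideal2 f g h \<Longrightarrow> in_ideal2 (- f) g h"
  unfolding in_ideal2_def by (metis minus_add_distrib mult_minus_left)

lemma partIII_dir:
  assumes pq: "p < q" and l1: "(n,c,w) \<in> Lambda p q" and l2: "(n, c + int m * int t, w') \<in> Lambda p q"
  shows "in_ideal2 (flam p q (n,c,w) - flam p q (n, c + int m * int t, w')) (X0 ^ (q - p) - X1 * Xj) (1 - X0 ^ (m * p) * X1 ^ m)"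
proof -
  let ?h = "X0 ^ (m * p) * X1 ^ m"
  let ?F = "flam p q (n,c,w)"
  let ?F2 = "flam p q (n, c + int m * int t, w + int p * int m * int t)"
  have s: "(n, c + int m * int t, w + int p * int m * int t) \<in> Lambda p q" "?F2 = ?F * ?h ^ t"
    using shift_m[OF pq l1, of m t] by auto
  obtain A where A: "?F2 - flam p q (n, c + int m * int t, w') = A * (X0 ^ (q - p) - X1 * Xj)"
    using partI[OF pq s(1) l2] by (auto simp: dvd_def mult.commute)
  obtain B where B: "1 ^ t - ?h ^ t = (1 - ?h) * B" using dvd_pow_diff[of 1 ?h t] by (auto simp: dvd_def)
  have "?F - flam p q (n, c + int m * int t, w') = (?F - ?F2) + (?F2 - flam p q (n, c + int m * int t, w'))" by simp
  also have "?F - ?F2 = ?F * (1 ^ t - ?h ^ t)" using s(2) by (simp add: algebra_simps)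
  also have "\<dots> = (?F * B) * (1 - ?h)" unfolding B by (simp add: algebra_simps)
  finally show ?thesis unfolding in_ideal2_def using A by (metis add.commute)
qed

lemma partIV_dir:
  assumes pq: "p < q" and l1: "(n,c,w) \<in> Lambda p q"
  shows "(1 - X1 ^ (a * q) * Xj ^ (a * p)) dvd (flam p q (n,c,w) - flam p q (n, c + int (a*(q-p)) * int t, w))"
proof -
  let ?k = "X1 ^ (a * q) * Xj ^ (a * p)"
  have s: "flam p q (n, c + int (a*(q-p)) * int t, w) = flam p q (n,c,w) * ?k ^ t"
    using shift_a[OF pq l1] by auto
  have "flam p q (n,c,w) - flam p q (n, c + int (a*(q-p)) * int t, w) = flam p q (n,c,w) * (1 ^ t - ?k ^ t)"
    using s by (simp add: algebra_simps)
  then show ?thesis using dvd_pow_diff[of 1 ?k t] by (metis dvd_mult)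
qed

lemma omega_least:
  assumes pq: "p < q" and l: "(n,c,w) \<in> Lambda p q"
  shows "(n, c, omega_min p q n c) \<in> Lambda p q \<and> (\<forall>y. (n,c,y) \<in> Lambda p q \<longrightarrow> omega_min p q n c \<le> y)"
  unfolding omega_min_def
  by (rule int_least[where b="-n"]) (use l Lam_facts(1)[OF pq] in auto)

lemma partV_dir:
  assumes pq: "p < q" and l1: "(n,c,w) \<in> Lambda p q" and l2: "(n, c + int (a*(q-p)) * int t, w') \<in> Lambda p q"
    and e1: "w = omega_min p q n c" and e2: "w' = omega_min p q n (c + int (a*(q-p)) * int t)"
  shows "w = w'"
proof -
  let ?c' = "c + int (a*(q-p)) * int t"
  have m1: "\<forall>y. (n,c,y) \<in> Lambda p q \<longrightarrow> w \<le> y" using omega_least[OF pq l1] e1 by simp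
  have m2: "\<forall>y. (n,?c',y) \<in> Lambda p q \<longrightarrow> w' \<le> y" using omega_least[OF pq l2] e2 by simp
  have "(n, ?c', w) \<in> Lambda p q" using shift_a[OF pq l1] by auto
  then have le: "w' \<le> w" using m2 by simp
  have d1: "(int q - int p) dvd (int p * c - w)" using Lam_facts(3)[OF pq l1] .
  have d2: "(int q - int p) dvd (int p * ?c' - w')" using Lam_facts(3)[OF pq l2] .
  have "w - w' = (int p * ?c' - w') - (int p * c - w) - (int q - int p) * (int p * int a * int t)"
    using pq by (simp add: of_nat_diff algebra_simps)
  then have "(int q - int p) dvd (w - w')" using d1 d2
    by (metis dvd_diff dvd_triv_left)
  then obtain s where s: "w - w' = (int q - int p) * s" by (auto simp: dvd_def)
  have "0 \<le> (int q - int p) * s" using le s by simp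
  moreover have "int q - int p > 0" using pq by simp
  ultimately have "s \<ge> 0" by (simp add: zero_le_mult_iff)
  then have s': "w' = w - int (q - p) * int (nat s)" using s pq by (simp add: of_nat_diff)
  have "n + w' \<ge> 0" using Lam_facts(1)[OF pq l2] by simp
  then have "(n,c,w') \<in> Lambda p q" using lower_w[OF pq l1, of "nat s"] s' by simp
  then have "w \<le> w'" using m1 by simp
  then show ?thesis using le by simp
qed

theorem lemma4p18:
  fixes p q m :: nat and n c w c' w' :: int
  assumes "0 < p" and "p < q" and "coprime p q" and "0 < m"
    and "(n, c, w) \<in> Lambda p q" and "(n, c', w') \<in> Lambda p q"
    and "[c = c'] (mod int m)"
  shows "(c = c' \<longrightarrow> in_ideal1 (flam p q (n, c, w) - flam p q (n, c', w')) (X0 ^ (q - p) - X1 * Xj))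
    \<and> (c > c_min p q m n c \<longrightarrow>
         in_ideal2 (flam p q (n, c, w)) (X0 ^ (q - p) - X1 * Xj) (X0 ^ (m * p) * X1 ^ m))
    \<and> in_ideal2 (flam p q (n, c, w) - flam p q (n, c', w')) (X0 ^ (q - p) - X1 * Xj) (1 - X0 ^ (m * p) * X1 ^ m)
    \<and> (\<forall>a::nat. 0 < a \<and> m = a * (q - p) \<longrightarrow>
         (w = w' \<longrightarrow> in_ideal1 (flam p q (n, c, w) - flam p q (n, c', w')) (1 - X1 ^ (a * q) * Xj ^ (a * p)))
       \<and> (w = omega_min p q n c \<and> w' = omega_min p q n c' \<longrightarrow>
            w = w' \<and> in_ideal1 (flam p q (n, c, w) - flam p q (n, c', w')) (1 - X1 ^ (a * q) * Xj ^ (a * p))))"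
proof -
  note pq = assms(2) and l1 = assms(5) and l2 = assms(6)
  let ?g = "X0 ^ (q - p) - X1 * Xj"
  let ?h = "X0 ^ (m * p) * X1 ^ m"
  let ?F = "flam p q (n, c, w)" and ?F' = "flam p q (n, c', w')"
  obtain k where k: "c' = c + int m * k" using assms(7) by (auto simp: cong_iff_lin)
  have I: "c = c' \<longrightarrow> in_ideal1 (?F - ?F') ?g"
    using partI[OF pq l1] l2 by (auto simp: in1_dvd)
  have II: "c > c_min p q m n c \<longrightarrow> in_ideal2 ?F ?g ?h"
  proof
    assume gt: "c > c_min p q m n c"
    let ?P = "\<lambda>x. [x = c] (mod int m) \<and> (\<exists>w. (n, x, w) \<in> Lambda p q)"
    have bnd: "- \<bar>n\<bar> \<le> y" if Py: "?P y" for y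
    proof -
      obtain w0 where "(n,y,w0) \<in> Lambda p q" using Py by blast
      then have qy: "int q * y \<ge> -n" using Lam_facts(2)[OF pq] by blast
      show ?thesis
      proof (rule ccontr)
        assume "\<not> ?thesis"
        then have y0: "y < 0" "y < - \<bar>n\<bar>" by auto
        have "int q * y \<le> 1 * y" by (rule mult_right_mono_neg) (use pq y0 in auto)
        then show False using qy y0 by linarith
      qed
    qed
    have "?P (LEAST x. ?P x)" using int_least[where P="?P", OF _ bnd, of c] l1 by auto
    then have Pc0: "?P (c_min p q m n c)" unfolding c_min_def .
    then obtain w0 where l0: "(n, c_min p q m n c, w0) \<in> Lambda p q" by blast
    from Pc0 obtain t where t: "c = c_min p q m n c + int m * t" by (auto simp: cong_iff_lin)
    have "t > 0"
    proof (rule ccontr)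
      assume "\<not> t > 0"
      then have "int m * t \<le> 0" using assms(4) by (simp add: mult_nonneg_nonpos)
      then show False using t gt by linarith
    qed
    then have tn: "c = c_min p q m n c + int m * int (nat t)" "nat t > 0" using t by auto
    let ?F2 = "flam p q (n, c, w0 + int p * int m * int (nat t))"
    have s: "(n, c, w0 + int p * int m * int (nat t)) \<in> Lambda p q"
      "?F2 = flam p q (n, c_min p q m n c, w0) * ?h ^ nat t"
      using shift_m[OF pq l0, of m "nat t"] tn(1) by auto
    obtain A where A: "?F - ?F2 = A * ?g"
      using partI[OF pq l1 s(1)] by (auto simp: dvd_def mult.commute)
    have "?h ^ nat t = ?h ^ (nat t - 1) * ?h" using tn(2)
      by (metis Suc_diff_1 power_Suc2)
    then have "?F = A * ?g + (flam p q (n, c_min p q m n c, w0) * ?h ^ (nat t - 1)) * ?h"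
      using A s(2) by (simp add: algebra_simps eq_diff_eq)
    then show "in_ideal2 ?F ?g ?h" unfolding in_ideal2_def by blast
  qed
  have III: "in_ideal2 (?F - ?F') ?g (1 - ?h)"
  proof (cases "k \<ge> 0")
    case True
    then have "c' = c + int m * int (nat k)" using k by simp
    then show ?thesis using partIII_dir[OF pq l1, of m "nat k" w'] l2 by simp
  next
    case False
    then have "c = c' + int m * int (nat (-k))" using k by simp
    then have "in_ideal2 (?F' - ?F) ?g (1 - ?h)" using partIII_dir[OF pq l2, of m "nat (-k)" w] l1 by simp
    from in2_neg[OF this] show ?thesis by simp
  qed
  have IV: "\<forall>a::nat. 0 < a \<and> m = a * (q - p) \<longrightarrow>
         (w = w' \<longrightarrow> in_ideal1 (?F - ?F') (1 - X1 ^ (a * q) * Xj ^ (a * p)))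
       \<and> (w = omega_min p q n c \<and> w' = omega_min p q n c' \<longrightarrow>
            w = w' \<and> in_ideal1 (?F - ?F') (1 - X1 ^ (a * q) * Xj ^ (a * p)))"
  proof (intro allI impI)
    fix a :: nat assume am: "0 < a \<and> m = a * (q - p)"
    let ?k = "1 - X1 ^ (a * q) * Xj ^ (a * p)"
    have iv: "w = w' \<Longrightarrow> in_ideal1 (?F - ?F') ?k"
    proof -
      assume ww: "w = w'"
      show ?thesis
      proof (cases "k \<ge> 0")
        case True
        then have "c' = c + int (a*(q-p)) * int (nat k)" using k am by simp
        then show ?thesis using partIV_dir[OF pq l1, of a "nat k"] ww by (simp add: in1_dvd)
      next
        case False
        then have "c = c' + int (a*(q-p)) * int (nat (-k))" using k am by simp
        then have "?k dvd (?F' - ?F)" using partIV_dir[OF pq l2, of a "nat (-k)"] ww by simp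
        then show ?thesis by (metis in1_dvd dvd_minus_iff minus_diff_eq)
      qed
    qed
    have v: "w = omega_min p q n c \<and> w' = omega_min p q n c' \<Longrightarrow> w = w'"
    proof -
      assume o: "w = omega_min p q n c \<and> w' = omega_min p q n c'"
      show ?thesis
      proof (cases "k \<ge> 0")
        case True
        then have "c' = c + int (a*(q-p)) * int (nat k)" using k am by simp
        then show ?thesis using partV_dir[OF pq l1, of a "nat k" w'] l2 o by simp
      next
        case False
        then have "c = c' + int (a*(q-p)) * int (nat (-k))" using k am by simp
        then show ?thesis using partV_dir[OF pq l2, of a "nat (-k)" w] l1 o by simp
      qed
    qed
    show "(w = w' \<longrightarrow> in_ideal1 (?F - ?F') ?k)
       \<and> (w = omega_min p q n c \<and> w' = omega_min p q n c' \<longrightarrow> w = w' \<and> in_ideal1 (?F - ?F') ?k)"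
      using iv v by blast
  qed
  show ?thesis using I II III IV by blast
qed

end
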